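(* Let $U=\begin{bmatrix} a & b\\ c & d\end{bmatrix}$ be a $2\times 2$ unitary matrix with either $abcd\neq0$ or $a=0$. Then $\mathcal{M}_s(U)\setminus(\mathcal{M}_{unif}\cup\mathcal{M}_{exp})\neq\emptyset$, i.e. the quantum walk defined by $U$ has a stationary measure that is neither uniform nor of the exponential form defining $\mathcal{M}_{exp}$.
   Context: Two-state quantum walk on $\mathbb{Z}$: states $\Psi=(\Psi(x))_{x\in\mathbb{Z}}\in(\mathbb{C}^2)^{\mathbb{Z}}$, $\Psi(x)={}^T[\Psi^L(x),\Psi^R(x)]$; evolution $(U^{(s)}\Psi)^L(x)=a\Psi^L(x+1)+b\Psi^R(x+1)$, $(U^{(s)}\Psi)^R(x)=c\Psi^L(x-1)+d\Psi^R(x-1)$. $\phi(\Psi)(x)=|\Psi^L(x)|^2+|\Psi^R(x)|^2$. $\mathcal{M}_s(U)=\{\mu\in[0,\infty)^{\mathbb{Z}}\setminus\{0\}:\exists\Psi_0$ with $\phi((U^{(s)})^n\Psi_0)=\mu$ for all $n\ge0\}$. $\mathcal{M}_{unif}=\{\mu_u^{(c)}:c>0\}$ with $\mu_u^{(c)}(x)=c$ for all $x$. $\mathcal{M}_{exp}$ is the set of measures $\mu$ on $\mathbb{Z}$ for which there exist constants $C_+,C_0,C_->0$ and $\gamma\in(0,1)$ with $\mu(x)=C_+\gamma^{-|x|}$ for $x\ge1$, $\mu(0)=C_0$, $\mu(x)=C_-\gamma^{-|x|}$ for $x\le -1$. *)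

theory Defs
  imports "HOL-Analysis.Analysis"
begin

definition unitary2 :: "complex \<Rightarrow> complex \<Rightarrow> complex \<Rightarrow> complex \<Rightarrow> bool" where
  "unitary2 a b c d \<longleftrightarrow>
     cnj a * a + cnj c * c = 1 \<and> cnj a * b + cnj c * d = 0 \<and>
     cnj b * a + cnj d * c = 0 \<and> cnj b * b + cnj d * d = 1"

text \<open>States: Psi x = (Psi^L x, Psi^R x).\<close>
type_synonym qstate = "int \<Rightarrow> complex \<times> complex"

definition Ustep :: "complex \<Rightarrow> complex \<Rightarrow> complex \<Rightarrow> complex \<Rightarrow> qstate \<Rightarrow> qstate" where
  "Ustep a b c d \<Psi> = (\<lambda>x.
     (a * fst (\<Psi> (x + 1)) + b * snd (\<Psi> (x + 1)),
      c * fst (\<Psi> (x - 1)) + d * snd (\<Psi> (x - 1))))"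

definition phi :: "qstate \<Rightarrow> int \<Rightarrow> real" where
  "phi \<Psi> x = (cmod (fst (\<Psi> x)))\<^sup>2 + (cmod (snd (\<Psi> x)))\<^sup>2"

definition Ms :: "complex \<Rightarrow> complex \<Rightarrow> complex \<Rightarrow> complex \<Rightarrow> (int \<Rightarrow> real) set" where
  "Ms a b c d = {\<mu>. (\<forall>x. \<mu> x \<ge> 0) \<and> \<mu> \<noteq> (\<lambda>_. 0) \<and>
     (\<exists>\<Psi>0. \<forall>n::nat. phi ((Ustep a b c d ^^ n) \<Psi>0) = \<mu>)}"

definition M_unif :: "(int \<Rightarrow> real) set" where
  "M_unif = {\<mu>. \<exists>C > 0. \<mu> = (\<lambda>_. C)}"

definition M_exp :: "(int \<Rightarrow> real) set" where
  "M_exp = {\<mu>. \<exists>Cp C0 Cm \<gamma>. Cp > 0 \<and> C0 > 0 \<and> Cm > 0 \<and> 0 < \<gamma> \<and> \<gamma> < 1 \<and>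
     (\<forall>x::int. (x \<ge> 1 \<longrightarrow> \<mu> x = Cp * \<gamma> powr (- real_of_int \<bar>x\<bar>)) \<and>
               (x = 0 \<longrightarrow> \<mu> x = C0) \<and>
               (x \<le> -1 \<longrightarrow> \<mu> x = Cm * \<gamma> powr (- real_of_int \<bar>x\<bar>)))}"

end

theory Submission
  imports Defs
begin

definition scl :: "complex \<Rightarrow> qstate \<Rightarrow> qstate" where
  "scl m \<Psi> = (\<lambda>x. (m * fst (\<Psi> x), m * snd (\<Psi> x)))"

lemma Ustep_scl: "Ustep a b c d (scl m \<Psi>) = scl m (Ustep a b c d \<Psi>)"
  by (auto simp: Ustep_def scl_def fun_eq_iff algebra_simps)

lemma iter_scl:
  assumes "Ustep a b c d \<Psi> = scl l \<Psi>"
  shows "(Ustep a b c d ^^ n) \<Psi> = scl (l^n) \<Psi>"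
proof (induction n)
  case 0 then show ?case by (simp add: scl_def)
next
  case (Suc n)
  have "(Ustep a b c d ^^ Suc n) \<Psi> = Ustep a b c d (scl (l^n) \<Psi>)" using Suc by simp
  also have "\<dots> = scl (l^n) (scl l \<Psi>)" by (simp add: Ustep_scl assms)
  also have "\<dots> = scl (l^Suc n) \<Psi>" by (simp add: scl_def algebra_simps)
  finally show ?case .
qed

lemma phi_scl: "cmod m = 1 \<Longrightarrow> phi (scl m \<Psi>) = phi \<Psi>"
  by (simp add: phi_def scl_def norm_mult fun_eq_iff)

lemma stat_in_Ms:
  assumes "Ustep a b c d \<Psi> = scl l \<Psi>" "cmod l = 1" "phi \<Psi> \<noteq> (\<lambda>_. 0)"
  shows "phi \<Psi> \<in> Ms a b c d"
  unfolding Ms_def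
proof (intro CollectI conjI allI)
  show "\<exists>\<Psi>0. \<forall>n. phi ((Ustep a b c d ^^ n) \<Psi>0) = phi \<Psi>"
    using assms by (intro exI[of _ \<Psi>]) (simp add: iter_scl phi_scl norm_power)
qed (use assms in \<open>auto simp: phi_def\<close>)

lemma alg3:
  fixes A B C D :: real
  assumes "C * D = A * B" "A + C = 1" "B + D = 1"
  shows "A + B = 1"
proof -
  have c: "C = 1 - A" and d: "D = 1 - B" using assms(2,3) by linarith+
  have "(1 - A) * (1 - B) = A * B" using assms(1) unfolding c d .
  hence "1 - A - B + A * B = A * B" by (simp add: algebra_simps)
  thus ?thesis by linarith
qed

lemma unit_facts:
  assumes "unitary2 a b c d"
  shows "(cmod a)^2 + (cmod b)^2 = 1" "cmod d = cmod a" "cmod c = cmod b" "cnj c * d = - (cnj a * b)"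
proof -
  have e1: "cnj a * a + cnj c * c = 1" and e2: "cnj a * b + cnj c * d = 0"
    and e4: "cnj b * b + cnj d * d = 1" using assms by (auto simp: unitary2_def)
  show e: "cnj c * d = - (cnj a * b)" using e2 by (simp add: eq_neg_iff_add_eq_0 add.commute)
  have r1: "(cmod a)^2 + (cmod c)^2 = 1"
  proof -
    have "complex_of_real ((cmod a)^2 + (cmod c)^2) = 1"
      by (simp only: of_real_add complex_norm_square) (subst mult.commute[of a], subst mult.commute[of c], rule e1)
    thus ?thesis by (simp only: of_real_eq_1_iff)
  qed
  have r2: "(cmod b)^2 + (cmod d)^2 = 1"
  proof -
    have "complex_of_real ((cmod b)^2 + (cmod d)^2) = 1"
      by (simp only: of_real_add complex_norm_square) (subst mult.commute[of b], subst mult.commute[of d], rule e4)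
    thus ?thesis by (simp only: of_real_eq_1_iff)
  qed
  have "cmod c * cmod d = cmod a * cmod b" using arg_cong[OF e, of cmod] by (simp add: norm_mult)
  hence r3: "(cmod c)^2 * (cmod d)^2 = (cmod a)^2 * (cmod b)^2" by (metis power_mult_distrib)
  have s: "(cmod a)^2 + (cmod b)^2 = 1"
  proof -
    show ?thesis by (rule alg3[OF r3 r1 r2])
  qed
  show "(cmod a)^2 + (cmod b)^2 = 1" by (fact s)
  have "(cmod d)^2 = (cmod a)^2" using s r2 by linarith
  thus "cmod d = cmod a" by (simp add: power2_eq_iff_nonneg)
  have "(cmod c)^2 = (cmod b)^2" using s r1 by linarith
  thus "cmod c = cmod b" by (simp add: power2_eq_iff_nonneg)
qed

lemma case_a0:
  assumes u: "unitary2 a b c d" and a0: "a = 0"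
  shows "\<exists>mu. mu \<in> Ms a b c d \<and> mu \<notin> M_unif \<and> mu \<notin> M_exp"
proof -
  note f = unit_facts[OF u]
  have cb: "cmod b = 1" using f(1) a0 norm_ge_zero[of b] by (auto simp add: power2_eq_1_iff)
  have cc: "cmod c = 1" using cb f(3) by simp
  have d0: "d = 0" using f(2) a0 by simp
  define l where "l = csqrt (b * c)"
  have ll: "l * l = b * c" unfolding l_def by (metis power2_csqrt power2_eq_square)
  have cl: "cmod l = 1"
  proof -
    have "cmod l * cmod l = 1" using arg_cong[OF ll, of cmod] cb cc by (simp add: norm_mult)
    thus ?thesis by (metis abs_norm_cancel mult_cancel_right1 norm_ge_zero zero_less_one_class.zero_le_one abs_of_nonneg power2_eq_square power2_eq_iff_nonneg one_power2)
  qed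
  define \<Psi> :: qstate where "\<Psi> = (\<lambda>x. if x = 0 then (l, 0) else if x = 1 then (0, c) else (0, 0))"
  have U: "Ustep a b c d \<Psi> = scl l \<Psi>"
    unfolding fun_eq_iff Ustep_def scl_def \<Psi>_def using a0 d0 ll
    by (auto simp: algebra_simps)
  have ph: "phi \<Psi> = (\<lambda>x. if x = 0 \<or> x = 1 then 1 else 0)"
    unfolding fun_eq_iff phi_def \<Psi>_def using cl cc by auto
  have nz: "phi \<Psi> \<noteq> (\<lambda>_. 0)"
  proof
    assume "phi \<Psi> = (\<lambda>_. 0)"
    hence "phi \<Psi> 0 = 0" by simp
    thus False unfolding ph by simp
  qed
  have "phi \<Psi> \<in> Ms a b c d" by (rule stat_in_Ms[OF U cl nz])
  moreover have "phi \<Psi> \<notin> M_unif"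
  proof
    assume "phi \<Psi> \<in> M_unif"
    then obtain C where "phi \<Psi> = (\<lambda>_. C)" unfolding M_unif_def by auto
    hence "phi \<Psi> 0 = phi \<Psi> 2" by simp
    thus False unfolding ph by simp
  qed
  moreover have "phi \<Psi> \<notin> M_exp"
  proof
    assume "phi \<Psi> \<in> M_exp"
    then obtain Cp Cm g where cp: "Cp > 0" and g: "g > 0" and
      h: "\<And>x::int. (x \<ge> 1 \<longrightarrow> phi \<Psi> x = Cp * g powr (- real_of_int \<bar>x\<bar>)) \<and>
               (x \<le> -1 \<longrightarrow> phi \<Psi> x = Cm * g powr (- real_of_int \<bar>x\<bar>))"
      unfolding M_exp_def by blast
    have "phi \<Psi> 2 = Cp * g powr (-2)" using h[of 2] by simp
    hence "phi \<Psi> 2 > 0" using cp g by simp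
    thus False unfolding ph by simp
  qed
  ultimately show ?thesis by blast
qed

lemma help_e1: fixes a b k s t P X :: complex
  assumes "a * k = s"
  shows "a * (P * k * (s * b * (s + t + (X + 1) * t))) + b * (P * k * ((X + 1) * a * t^2))
        = (s + t) * (P * (s * b * (s + t + X * t)))"
proof -
  have "a * (P * k * (s * b * (s + t + (X + 1) * t))) + b * (P * k * ((X + 1) * a * t^2))
    = (a * k) * P * b * (s * (s + t + (X + 1) * t) + (X + 1) * t^2)" by (simp add: algebra_simps power2_eq_square)
  also have "\<dots> = (s + t) * (P * (s * b * (s + t + X * t)))" unfolding assms by (simp add: algebra_simps power2_eq_square)
  finally show ?thesis .
qed
lemma help_e2: fixes a b c d k s t P Q X :: complex
  assumes "a * k = s" "t^2 = b * c" "s^2 = a * d" "P = Q * k"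
  shows "c * (Q * (s * b * (s + t + (X - 1) * t))) + d * (Q * ((X - 1) * a * t^2))
        = (s + t) * (P * (X * a * t^2))"
proof -
  have "c * (Q * (s * b * (s + t + (X - 1) * t))) + d * (Q * ((X - 1) * a * t^2))
     = Q * ((b * c) * s * (s + t + (X - 1) * t) + (a * d) * (X - 1) * t^2)" by (simp add: algebra_simps)
  also have "\<dots> = Q * (t^2 * s * (s + t + (X - 1) * t) + s^2 * (X - 1) * t^2)" using assms by simp
  also have "\<dots> = (s + t) * (Q * s * X * t^2)" by (simp add: algebra_simps power2_eq_square)
  also have "\<dots> = (s + t) * (P * (X * a * t^2))" unfolding assms(4) assms(1)[symmetric] by (simp add: algebra_simps)
  finally show ?thesis .
qed
lemma help_ph: fixes P s b t a X :: complex and A B :: complex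
  assumes "P * cnj P = 1" "s * cnj s = A" "b * cnj b = B" "t * cnj t = B" "a * cnj a = A"
    "s * cnj t + cnj s * t = 0" "A + B = 1"
  shows "(P * cnj P) * ((s * cnj s) * (b * cnj b) * (s + t + X * t) * (cnj s + cnj t + X * cnj t)
        + X * X * (a * cnj a) * (t * cnj t) * (t * cnj t)) = A * B * (1 + 2 * B * X + 2 * B * X^2)"
proof -
  have "(s + t + X * t) * (cnj s + cnj t + X * cnj t) = s * cnj s + (1 + X) * (s * cnj t + cnj s * t) + (1+X)^2 * (t * cnj t)"
    by (simp add: algebra_simps power2_eq_square)
  also have "\<dots> = A + (1+X)^2 * B" using assms by simp
  finally have h: "(s + t + X * t) * (cnj s + cnj t + X * cnj t) = A + (1+X)^2 * B" .
  have "(P * cnj P) * ((s * cnj s) * (b * cnj b) * (s + t + X * t) * (cnj s + cnj t + X * cnj t)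
        + X * X * (a * cnj a) * (t * cnj t) * (t * cnj t)) = A * B * (A + (1+X)^2 * B) + X * X * A * B * B"
    using assms h by (simp add: mult.assoc)
  also have "\<dots> = A * B * ((A + B) + 2 * B * X + 2 * B * X^2)" by (simp add: algebra_simps power2_eq_square)
  finally show ?thesis using assms(7) by simp
qed

lemma h_exp: fixes P s b l t X a :: complex assumes "cnj X = X"
  shows "(P * (s * b * (l + X * t))) * cnj (P * (s * b * (l + X * t))) + (P * (X * a * t^2)) * cnj (P * (X * a * t^2))
   = (P * cnj P) * ((s * cnj s) * (b * cnj b) * (l + X * t) * (cnj l + X * cnj t)
        + X * X * (a * cnj a) * (t * cnj t) * (t * cnj t))"
  using assms by (simp add: algebra_simps power2_eq_square)
lemma h_w: fixes a b c d s t :: complex assumes "s^2 = a*d" "t^2 = b*c" "cnj c * d = - (cnj a * b)"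
  shows "(s * cnj t)^2 = - ((a * cnj a) * (b * cnj b))"
proof -
  have "(s * cnj t)^2 = s^2 * cnj (t^2)" by (simp add: power_mult_distrib)
  also have "\<dots> = (a * cnj b) * (cnj c * d)" unfolding assms(1,2) by (simp add: mult_ac)
  also have "\<dots> = - ((a * cnj a) * (b * cnj b))" unfolding assms(3) by (simp add: mult_ac)
  finally show ?thesis .
qed

lemma re_zero_of_sq:
  fixes w :: complex
  assumes "w^2 = - complex_of_real r" "r \<ge> 0"
  shows "w + cnj w = 0"
proof -
  have i: "2 * Re w * Im w = 0" using arg_cong[OF assms(1), of Im] by (auto simp: power2_eq_square)
  have r: "(Re w)^2 - (Im w)^2 = - r" using arg_cong[OF assms(1), of Re] by (simp add: power2_eq_square)
  have "Re w = 0"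
  proof (rule ccontr)
    assume "Re w \<noteq> 0"
    hence "Im w = 0" using i by auto
    hence "(Re w)^2 = -r" using r by simp
    moreover have "(Re w)^2 > 0" using \<open>Re w \<noteq> 0\<close> by simp
    ultimately show False using assms(2) by simp
  qed
  thus ?thesis by (simp add: complex_eq_iff)
qed

lemma U_lemma:
  fixes a b c d s t l k :: complex
  assumes ak: "a * k = s" and tt: "t^2 = b * c" and ss: "s^2 = a * d" and k0: "k \<noteq> 0" and l_def: "l = s + t"
  defines "\<Psi> \<equiv> (\<lambda>x::int. (k powi x * (s * b * (l + of_int x * t)), k powi x * (of_int x * a * t^2)))"
  shows "Ustep a b c d \<Psi> = scl l \<Psi>"
  proof (rule ext)
    fix x :: int
    define P where "P = k powi x"
    define Q where "Q = k powi (x - 1)"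
    have P1: "k powi (x + 1) = P * k" using k0 by (simp add: P_def power_int_add_1)
    have QP: "P = Q * k" using k0 unfolding P_def Q_def by (metis diff_add_cancel power_int_add_1)
    have e1: "a * (P * k * (s * b * (l + (of_int x + 1) * t))) + b * (P * k * ((of_int x + 1) * a * t^2))
        = l * (P * (s * b * (l + of_int x * t)))"
      unfolding l_def by (rule help_e1[OF ak])
    have e2: "c * (Q * (s * b * (l + (of_int x - 1) * t))) + d * (Q * ((of_int x - 1) * a * t^2))
        = l * (P * (of_int x * a * t^2))"
      unfolding l_def by (rule help_e2[OF ak tt ss QP])
    have p1: "\<Psi> (x + 1) = (P * k * (s * b * (l + (of_int x + 1) * t)), P * k * ((of_int x + 1) * a * t^2))"
      unfolding \<Psi>_def P1 by (simp only: of_int_add of_int_1)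
    have p2: "\<Psi> (x - 1) = (Q * (s * b * (l + (of_int x - 1) * t)), Q * ((of_int x - 1) * a * t^2))"
      unfolding \<Psi>_def Q_def[symmetric] by (simp only: of_int_diff of_int_1)
    have p0: "\<Psi> x = (P * (s * b * (l + of_int x * t)), P * (of_int x * a * t^2))"
      unfolding \<Psi>_def P_def by (rule refl)
    show "Ustep a b c d \<Psi> x = scl l \<Psi> x"
      unfolding Ustep_def scl_def p0 p1 p2 fst_conv snd_conv e1 e2 by (rule refl)
  qed

lemma case_gen:
  assumes u: "unitary2 a b c d" and nz: "a * b * c * d \<noteq> 0"
  shows "\<exists>mu. mu \<in> Ms a b c d \<and> mu \<notin> M_unif \<and> mu \<notin> M_exp"
proof -
  note f = unit_facts[OF u]
  have a0: "a \<noteq> 0" and b0: "b \<noteq> 0" and c0: "c \<noteq> 0" and d0: "d \<noteq> 0" using nz by auto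
  define A where "A = (cmod a)^2"
  define B where "B = (cmod b)^2"
  have AB: "A + B = 1" using f(1) by (simp add: A_def B_def)
  have Apos: "A > 0" using a0 by (simp add: A_def)
  have Bpos: "B > 0" using b0 by (simp add: B_def)
  define s where "s = csqrt (a * d)"
  define t where "t = csqrt (b * c)"
  define l where "l = s + t"
  define k where "k = s / a"
  have ss: "s^2 = a * d" unfolding s_def by simp
  have tt: "t^2 = b * c" unfolding t_def by simp
  have s0: "s \<noteq> 0" using ss a0 d0 by auto
  have ak: "a * k = s" using a0 by (simp add: k_def)
  have k0: "k \<noteq> 0" using s0 a0 by (simp add: k_def)
  have cs: "cmod s = cmod a"
  proof -
    have "(cmod s)^2 = (cmod a)^2" using arg_cong[OF ss, of cmod] f(2) by (simp add: norm_mult norm_power power2_eq_square)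
    thus ?thesis by (simp add: power2_eq_iff_nonneg)
  qed
  have ct: "cmod t = cmod b"
  proof -
    have "(cmod t)^2 = (cmod b)^2" using arg_cong[OF tt, of cmod] f(3) by (simp add: norm_mult norm_power power2_eq_square)
    thus ?thesis by (simp add: power2_eq_iff_nonneg)
  qed
  have sA: "s * cnj s = complex_of_real A" using cs unfolding A_def by (simp flip: complex_norm_square)
  have aA: "a * cnj a = complex_of_real A" unfolding A_def by (simp flip: complex_norm_square)
  have tB: "t * cnj t = complex_of_real B" using ct unfolding B_def by (simp flip: complex_norm_square)
  have bB: "b * cnj b = complex_of_real B" unfolding B_def by (simp flip: complex_norm_square)
  have w0: "s * cnj t + cnj s * t = 0"
  proof -
    have "(s * cnj t)^2 = - ((a * cnj a) * (b * cnj b))" by (rule h_w[OF ss tt f(4)])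
    also have "\<dots> = - complex_of_real (A * B)" using aA bB by simp
    finally have "s * cnj t + cnj (s * cnj t) = 0"
      by (rule re_zero_of_sq) (use Apos Bpos in simp)
    thus ?thesis by (simp add: mult.commute)
  qed
  have cl: "cmod l = 1"
  proof -
    have "complex_of_real ((cmod l)^2) = l * cnj l" by (simp flip: complex_norm_square)
    also have "\<dots> = s * cnj s + t * cnj t + (s * cnj t + cnj s * t)" by (simp add: l_def algebra_simps)
    also have "\<dots> = 1" using sA tB w0 AB by (metis add.right_neutral of_real_1 of_real_add)
    finally have "(cmod l)^2 = 1" by (metis of_real_eq_1_iff)
    thus ?thesis using norm_ge_zero[of l] by (auto simp: power2_eq_1_iff)
  qed
  have ck: "cmod k = 1" using cs a0 by (simp add: k_def norm_divide)
  define \<Psi> :: qstate where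
    "\<Psi> = (\<lambda>x. (k powi x * (s * b * (l + of_int x * t)), k powi x * (of_int x * a * t^2)))"
  have U: "Ustep a b c d \<Psi> = scl l \<Psi>"
    unfolding \<Psi>_def by (rule U_lemma[OF ak tt ss k0 l_def])
  have ph: "phi \<Psi> x = A * B * (1 + 2 * B * of_int x + 2 * B * (of_int x)^2)" for x
  proof -
    define P where "P = k powi x"
    define X :: complex where "X = of_int x"
    have PP: "P * cnj P = 1" unfolding P_def using ck
      by (metis complex_norm_square norm_power_int of_real_1 power_int_1_left power_one)
    have "complex_of_real (phi \<Psi> x) =
       (P * (s * b * (l + X * t))) * cnj (P * (s * b * (l + X * t))) + (P * (X * a * t^2)) * cnj (P * (X * a * t^2))"
      unfolding phi_def \<Psi>_def P_def X_def by (simp only: of_real_add complex_norm_square fst_conv snd_conv)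
    also have "\<dots> = (P * cnj P) * ((s * cnj s) * (b * cnj b) * (l + X * t) * (cnj s + cnj t + X * cnj t)
        + X * X * (a * cnj a) * (t * cnj t) * (t * cnj t))"
      by (subst h_exp) (simp_all add: X_def l_def)
    also have "\<dots> = complex_of_real A * complex_of_real B * (1 + 2 * complex_of_real B * X + 2 * complex_of_real B * X^2)"
      unfolding l_def by (rule help_ph[OF PP sA bB tB aA w0]) (metis AB of_real_1 of_real_add)
    also have "\<dots> = complex_of_real (A * B * (1 + 2 * B * of_int x + 2 * B * (of_int x)^2))"
      by (simp add: X_def)
    finally show ?thesis by (metis of_real_eq_iff)
  qed
  have nz: "phi \<Psi> \<noteq> (\<lambda>_. 0)"
  proof
    assume "phi \<Psi> = (\<lambda>_. 0)"
    hence "phi \<Psi> 0 = 0" by simp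
    thus False using ph[of 0] Apos Bpos by simp
  qed
  have "phi \<Psi> \<in> Ms a b c d" by (rule stat_in_Ms[OF U cl nz])
  moreover have "phi \<Psi> \<notin> M_unif"
  proof
    assume "phi \<Psi> \<in> M_unif"
    then obtain C where "phi \<Psi> = (\<lambda>_. C)" unfolding M_unif_def by auto
    hence "phi \<Psi> 0 = phi \<Psi> 1" by simp
    thus False unfolding ph using Apos Bpos by simp
  qed
  moreover have "phi \<Psi> \<notin> M_exp"
  proof
    assume "phi \<Psi> \<in> M_exp"
    then obtain Cp Cm g where g: "g > 0" and
      h: "\<And>x::int. (x \<ge> 1 \<longrightarrow> phi \<Psi> x = Cp * g powr (- real_of_int \<bar>x\<bar>)) \<and>
               (x \<le> -1 \<longrightarrow> phi \<Psi> x = Cm * g powr (- real_of_int \<bar>x\<bar>))"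
      unfolding M_exp_def by blast
    have p1: "phi \<Psi> 1 = Cp * g powr (-1)" using h[of 1] by simp
    have p2: "phi \<Psi> 2 = Cp * g powr (-2)" using h[of 2] by simp
    have p3: "phi \<Psi> 3 = Cp * g powr (-3)" using h[of 3] by simp
    have m1: "phi \<Psi> (-1) = Cm * g powr (-1)" using h[of "-1"] by simp
    have m2: "phi \<Psi> (-2) = Cm * g powr (-2)" using h[of "-2"] by simp
    have m3: "phi \<Psi> (-3) = Cm * g powr (-3)" using h[of "-3"] by simp
    have gg: "g powr (-2) * g powr (-2) = g powr (-1) * g powr (-3)"
      by (simp only: powr_add[symmetric]) simp
    have E1: "phi \<Psi> 2 * phi \<Psi> 2 = phi \<Psi> 1 * phi \<Psi> 3"
      using gg unfolding p1 p2 p3 by (metis mult.assoc mult.left_commute)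
    have E2: "phi \<Psi> (-2) * phi \<Psi> (-2) = phi \<Psi> (-1) * phi \<Psi> (-3)"
      using gg unfolding m1 m2 m3 by (metis mult.assoc mult.left_commute)
    define K where "K = A * B"
    have K0: "K \<noteq> 0" using Apos Bpos by (simp add: K_def)
    have "K * K * ((1 + 12 * B) * (1 + 12 * B)) = K * K * ((1 + 4 * B) * (1 + 24 * B))"
      using E1 unfolding ph K_def by (simp add: algebra_simps)
    hence "(1 + 12 * B) * (1 + 12 * B) = (1 + 4 * B) * (1 + 24 * B)" using K0 by simp
    hence q1: "B * (12 * B - 1) = 0" by (simp add: algebra_simps)
    have "K * K * ((1 + 4 * B) * (1 + 4 * B)) = K * K * (1 + 12 * B)"
      using E2 unfolding ph K_def by (simp add: algebra_simps)
    hence "(1 + 4 * B) * (1 + 4 * B) = 1 + 12 * B" using K0 by simp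
    hence q2: "B * (4 * B - 1) = 0" by (simp add: algebra_simps)
    show False using q1 q2 Bpos by simp
  qed
  ultimately show ?thesis by blast
qed

theorem theorem2:
  fixes a b c d :: complex
  assumes "unitary2 a b c d"
    and "a * b * c * d \<noteq> 0 \<or> a = 0"
  shows "Ms a b c d - (M_unif \<union> M_exp) \<noteq> {}"
proof -
  obtain mu where "mu \<in> Ms a b c d" "mu \<notin> M_unif" "mu \<notin> M_exp"
    using assms case_a0 case_gen by blast
  thus ?thesis by blast
qed

end
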